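(* Let $N=\mathbb R^{2n}$ with Darboux coordinates $(\tilde\rho,y)$, tautological one-form $\theta=y_i\,d\tilde\rho^i$ and symplectic form $\Omega=-d\theta=d\tilde\rho^i\wedge dy_i$; let $N_{\mathbb C}\simeq\mathbb C^{2n}$ be its complexification, with $\theta,\Omega$ extended $\mathbb C$-bilinearly ($\Omega_{\mathbb C}$). Let $M\in\mathrm{Sym}(n,\mathbb C)$ with $\mathrm{Im}\,M$ nondegenerate, let $L_M^{(+)}=\{(u,Mu)\}$, $L_M^{(-)}=\{(u,\bar Mu)\}$ ($u\in\mathbb C^n$) be the corresponding constant subbundles of $TN_{\mathbb C}$ (so $TN_{\mathbb C}=L_M^{(+)}\oplus L_M^{(-)}$), and let $\Pi_M^{(+)}$ be the projector onto $L_M^{(+)}$ along $L_M^{(-)}$. Let $H:N\to\mathbb R$ be real-analytic, denote also by $H$ its holomorphic extension to $N_{\mathbb C}$, and let $X_H$ be the complex Hamiltonian vector field defined by $\iota_{X_H}\Omega_{\mathbb C}=dH$. Consider the action $\mathcal S[z]=\int_{t_0}^{t_1}(\theta(\dot z(t))-H(z(t)))\,dt$ on $C^1$ curves $z:[t_0,t_1]\to N_{\mathbb C}$. Call $z$ admissible if $\dot z(t)\in L_M^{(+)}$ for all $t$, and call a $C^1$ vector field $\delta z(t)\in T_{z(t)}N_{\mathbb C}$ along $z$ an admissible variation if $\delta z(t)\in L_M^{(-)}$ for all $t$ and $\delta z(t_0)=\delta z(t_1)=0$. Then an admissible curve $z$ is stationary for $\mathcal S$ (first variation $\frac{d}{d\varepsilon}|_{\varepsilon=0}\mathcal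 S[z_\varepsilon]=0$ in $\mathbb C$, for real-parameter variations $z_\varepsilon$ with $\frac{d}{d\varepsilon}|_{0}z_\varepsilon=\delta z$) under all admissible variations if and only if $\dot z(t)=\Pi_M^{(+)}X_H(z(t))$ for all $t\in[t_0,t_1]$. *)

theory Defs
  imports "HOL-Analysis.Analysis"
begin

text \<open>Points of N_C = C^{2n} are pairs (rho, y) of vectors in C^n (index type 'n).\<close>
type_synonym 'n pt = "(complex^'n) \<times> (complex^'n)"

definition cmul :: "complex \<Rightarrow> 'n::finite pt \<Rightarrow> 'n pt" where
  "cmul c v = (c *s fst v, c *s snd v)"

definition theta :: "'n::finite pt \<Rightarrow> 'n pt \<Rightarrow> complex" where
  "theta z v = (\<Sum>i\<in>UNIV. snd z $ i * fst v $ i)"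

definition Omega :: "'n::finite pt \<Rightarrow> 'n pt \<Rightarrow> complex" where
  "Omega a b = (\<Sum>i\<in>UNIV. fst a $ i * snd b $ i - snd a $ i * fst b $ i)"

text \<open>H is holomorphic on all of C^{2n}: real-Frechet differentiable with C-linear derivative.\<close>
definition holo :: "('n::finite pt \<Rightarrow> complex) \<Rightarrow> bool" where
  "holo H \<longleftrightarrow> (\<forall>z. H differentiable (at z) \<and>
      (\<forall>v. frechet_derivative H (at z) (cmul \<i> v) = \<i> * frechet_derivative H (at z) v))"

definition real_on_reals :: "('n::finite pt \<Rightarrow> complex) \<Rightarrow> bool" where
  "real_on_reals H \<longleftrightarrow> (\<forall>rho y. (\<forall>i. rho $ i \<in> \<real> \<and> y $ i \<in> \<real>) \<longrightarrow> H (rho, y) \<in> \<real>)"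

definition ham_vf :: "('n::finite pt \<Rightarrow> complex) \<Rightarrow> 'n pt \<Rightarrow> 'n pt" where
  "ham_vf H z = (THE X. \<forall>v. Omega X v = frechet_derivative H (at z) v)"

definition cnj_mat :: "complex^'n^'n \<Rightarrow> complex^'n^'n" where
  "cnj_mat M = (\<chi> i j. cnj (M $ i $ j))"

definition im_mat :: "complex^'n^'n \<Rightarrow> real^'n^'n" where
  "im_mat M = (\<chi> i j. Im (M $ i $ j))"

definition Lplus :: "complex^'n::finite^'n \<Rightarrow> 'n pt set" where
  "Lplus M = {(u, M *v u) | u. True}"

definition Lminus :: "complex^'n::finite^'n \<Rightarrow> 'n pt set" where
  "Lminus M = {(u, cnj_mat M *v u) | u. True}"

definition proj_plus :: "complex^'n::finite^'n \<Rightarrow> 'n pt \<Rightarrow> 'n pt" where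
  "proj_plus M v = (THE a. a \<in> Lplus M \<and> v - a \<in> Lminus M)"

text \<open>C^1 on the closed interval [t0,t1] (one-sided derivatives at the endpoints).\<close>
definition C1_on :: "(real \<Rightarrow> 'a::real_normed_vector) \<Rightarrow> real \<Rightarrow> real \<Rightarrow> bool" where
  "C1_on f t0 t1 \<longleftrightarrow> (\<exists>f'. (\<forall>t\<in>{t0..t1}. (f has_vector_derivative f' t) (at t within {t0..t1}))
                         \<and> continuous_on {t0..t1} f')"

definition action :: "('n::finite pt \<Rightarrow> complex) \<Rightarrow> (real \<Rightarrow> 'n pt) \<Rightarrow> real \<Rightarrow> real \<Rightarrow> complex" where
  "action H z t0 t1 = integral {t0..t1}
     (\<lambda>t. theta (z t) (vector_derivative z (at t within {t0..t1})) - H (z t))"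

definition admissible :: "complex^'n::finite^'n \<Rightarrow> (real \<Rightarrow> 'n pt) \<Rightarrow> real \<Rightarrow> real \<Rightarrow> bool" where
  "admissible M z t0 t1 \<longleftrightarrow> C1_on z t0 t1 \<and>
     (\<forall>t\<in>{t0..t1}. vector_derivative z (at t within {t0..t1}) \<in> Lplus M)"

definition adm_var :: "complex^'n::finite^'n \<Rightarrow> (real \<Rightarrow> 'n pt) \<Rightarrow> real \<Rightarrow> real \<Rightarrow> bool" where
  "adm_var M dz t0 t1 \<longleftrightarrow> C1_on dz t0 t1 \<and> (\<forall>t\<in>{t0..t1}. dz t \<in> Lminus M)
     \<and> dz t0 = 0 \<and> dz t1 = 0"

end

theory Submission
  imports Defs "HOL-Complex_Analysis.Complex_Analysis"
begin


lemma theta_add_left: "theta (a + b) v = theta a v + theta b v"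
  by (simp add: theta_def sum.distrib distrib_right)
lemma theta_add_right: "theta a (v + w) = theta a v + theta a w"
  by (simp add: theta_def sum.distrib distrib_left)
lemma theta_scaleR_left: "theta (r *\<^sub>R a) v = r *\<^sub>R theta a v"
  by (simp add: theta_def scaleR_sum_right)
lemma theta_scaleR_right: "theta a (r *\<^sub>R v) = r *\<^sub>R theta a v"
  by (simp add: theta_def scaleR_sum_right)
lemma theta_zero_right[simp]: "theta a 0 = 0"
  by (simp add: theta_def)
lemma Omega_theta: "Omega a b = theta b a - theta a b"
  by (simp add: Omega_def theta_def sum_subtractf mult.commute)
lemma Omega_diff_left: "Omega (a - b) v = Omega a v - Omega b v"
  by (simp add: Omega_def sum_subtractf[symmetric] algebra_simps)
lemma Omega_cmul_right: "Omega a (cmul c v) = c * Omega a v"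
  by (simp add: Omega_def cmul_def sum_distrib_left algebra_simps)
lemma Omega_neg_left: "Omega (- a) v = - Omega a v"
  by (simp add: Omega_def sum_negf[symmetric] algebra_simps)

lemma cmul_decomp: "cmul c v = Re c *\<^sub>R v + Im c *\<^sub>R cmul \<i> v"
proof -
  have h: "c * x = Re c *\<^sub>R x + Im c *\<^sub>R (\<i> * x)" for x :: complex
    by (simp add: complex_eq_iff)
  show ?thesis by (simp add: cmul_def prod_eq_iff vec_eq_iff h)
qed

lemma linear_cmul: "linear (\<lambda>c. cmul c v)"
proof (rule linearI)
  show "cmul (b1 + b2) v = cmul b1 v + cmul b2 v" for b1 b2
    by (simp add: cmul_def vec_eq_iff distrib_right)
  show "cmul (r *\<^sub>R b) v = r *\<^sub>R cmul b v" for r b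
    by (simp add: cmul_def vec_eq_iff)
qed

lemma bounded_linear_cmul: "bounded_linear (\<lambda>c. cmul c v)"
  using linear_cmul linear_conv_bounded_linear by blast

lemma cmul_zero[simp]: "cmul 0 v = 0"
  by (simp add: cmul_def zero_prod_def)



lemma holo_deriv: "holo H \<Longrightarrow> (H has_derivative frechet_derivative H (at x)) (at x)"
  using frechet_derivative_works holo_def by blast

lemma holo_bl: "holo H \<Longrightarrow> bounded_linear (frechet_derivative H (at x))"
  using holo_deriv has_derivative_bounded_linear by blast

lemma holo_lin: "holo H \<Longrightarrow> linear (frechet_derivative H (at x))"
  using holo_bl bounded_linear.linear by blast

lemma cplx_decomp: "Re c *\<^sub>R x + Im c *\<^sub>R (\<i> * x) = c * (x::complex)"
  by (simp add: complex_eq_iff)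

lemma holo_cmul: assumes "holo H"
  shows "frechet_derivative H (at x) (cmul c v) = c * frechet_derivative H (at x) v"
proof -
  have l: "linear (frechet_derivative H (at x))" using holo_lin assms by blast
  have i: "frechet_derivative H (at x) (cmul \<i> v) = \<i> * frechet_derivative H (at x) v"
    using assms holo_def by blast
  show ?thesis
    by (simp add: cmul_decomp[of c v] linear_add[OF l] linear_scale[OF l] i cplx_decomp)
qed

lemma holo_cont: "holo H \<Longrightarrow> continuous_on UNIV H"
  by (meson continuous_at_imp_continuous_on differentiable_imp_continuous_within holo_def)

lemma holo_slice: assumes "holo H"
  shows "((\<lambda>w. H (x + cmul w v)) has_field_derivative frechet_derivative H (at (x + cmul w v)) v) (at w)"
proof -
  have g: "((\<lambda>w. x + cmul w v) has_derivative (\<lambda>h. 0 + cmul h v)) (at w)"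
    by (intro has_derivative_add has_derivative_const bounded_linear_imp_has_derivative bounded_linear_cmul)
  have "((H \<circ> (\<lambda>w. x + cmul w v)) has_derivative (frechet_derivative H (at (x + cmul w v)) \<circ> (\<lambda>h. 0 + cmul h v))) (at w)"
    by (rule diff_chain_at[OF g holo_deriv[OF assms]])
  moreover have "(frechet_derivative H (at (x + cmul w v)) \<circ> (\<lambda>h. 0 + cmul h v))
      = (*) (frechet_derivative H (at (x + cmul w v)) v)"
    by (rule ext) (simp add: holo_cmul[OF assms] mult.commute)
  ultimately show ?thesis by (simp add: has_field_derivative_def o_def)
qed

lemma holo_cont_D: assumes hol: "holo H"
  shows "continuous_on UNIV (\<lambda>x. frechet_derivative H (at x) v)"
proof (rule continuous_at_imp_continuous_on, intro ballI)
  fix x0 :: "'a::finite pt"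
  let ?D = "\<lambda>x. frechet_derivative H (at x) v"
  let ?G = "\<lambda>p. H (fst p + cmul (snd p) v)"
  let ?K = "cball x0 1 \<times> sphere (0::complex) 1"
  have cK: "compact ?K" by (intro compact_Times compact_cball compact_sphere)
  have "continuous_on ?K ?G"
    by (rule continuous_on_compose2[OF holo_cont[OF hol]])
       (auto intro!: continuous_intros continuous_on_compose2[OF linear_continuous_on[OF bounded_linear_cmul]])
  then have uc: "uniformly_continuous_on ?K ?G" using cK compact_uniformly_continuous by blast
  show "isCont ?D x0"
    unfolding continuous_at_eps_delta
  proof (intro allI impI)
    fix e :: real assume e: "e > 0"
    obtain d where d: "d > 0" and dd: "\<And>p q. p \<in> ?K \<Longrightarrow> q \<in> ?K \<Longrightarrow> dist q p < d \<Longrightarrow> dist (?G q) (?G p) < e/2"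
      using uc e unfolding uniformly_continuous_on_def by (metis half_gt_zero)
    have "dist (?D x) (?D x0) < e" if x: "dist x x0 < min d 1" for x
    proof -
      let ?psi = "\<lambda>w. H (x + cmul w v) - H (x0 + cmul w v)"
      have der: "(?psi has_field_derivative (?D (x + cmul w v) - ?D (x0 + cmul w v))) (at w)" for w
        by (intro derivative_intros holo_slice[OF hol])
      have hol2: "?psi holomorphic_on ball 0 1"
        using der unfolding holomorphic_on_def field_differentiable_def
        by (meson has_field_derivative_at_within)
      have cont2: "continuous_on (cball 0 1) ?psi"
        using der by (meson DERIV_isCont continuous_at_imp_continuous_on)
      have bnd: "norm (?psi w) \<le> e/2" if w: "norm (0 - w) = 1" for w
      proof -
        have "(x, w) \<in> ?K" "(x0, w) \<in> ?K" using w x by (auto simp: dist_commute)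
        moreover have "dist (x, w) (x0, w) < d" using x by (simp add: dist_Pair_Pair)
        ultimately have "dist (?G (x, w)) (?G (x0, w)) < e/2" using dd by blast
        then show ?thesis by (simp add: dist_norm)
      qed
      have "norm ((deriv ^^ 1) ?psi 0) \<le> (fact 1) * (e/2) / 1^1"
        by (rule Cauchy_inequality[OF hol2 cont2 _ bnd]) auto
      moreover have "deriv ?psi 0 = ?D x - ?D x0"
        using DERIV_imp_deriv[OF der[of 0]] by simp
      ultimately show ?thesis using e by (simp add: dist_norm)
    qed
    then show "\<exists>d>0. \<forall>x. dist x x0 < d \<longrightarrow> dist (?D x) (?D x0) < e"
      using d by (metis min_less_iff_conj zero_less_one)
  qed
qed



lemma holo_cont_D2:
  assumes hol: "holo H" and p: "continuous_on S p" and q: "continuous_on S q"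
  shows "continuous_on S (\<lambda>s. frechet_derivative H (at (p s)) (q s))"
proof -
  have l: "linear (frechet_derivative H (at x))" for x using holo_lin hol by blast
  have eq: "frechet_derivative H (at (p s)) (q s) = (\<Sum>b\<in>Basis. (q s \<bullet> b) *\<^sub>R frechet_derivative H (at (p s)) b)" for s
  proof -
    have "frechet_derivative H (at (p s)) (q s) = frechet_derivative H (at (p s)) (\<Sum>b\<in>Basis. (q s \<bullet> b) *\<^sub>R b)"
      by (simp add: euclidean_representation)
    also have "\<dots> = (\<Sum>b\<in>Basis. (q s \<bullet> b) *\<^sub>R frechet_derivative H (at (p s)) b)"
      by (simp add: linear_sum[OF l] linear_scale[OF l])
    finally show ?thesis .
  qed
  show ?thesis
    unfolding eq
    by (intro continuous_intros q continuous_on_compose2[OF holo_cont_D[OF hol] p]) auto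
qed

lemma sym_entry: "transpose M = M \<Longrightarrow> M $ i $ j = M $ j $ i"
  by (metis (no_types, lifting) transpose_def vec_lambda_beta)

lemma cnj_sym: "transpose M = M \<Longrightarrow> cnj_mat M $ i $ j = cnj_mat M $ j $ i"
  by (simp add: cnj_mat_def sym_entry)

lemma Lminus_lagr:
  assumes "transpose M = M" "a \<in> Lminus M" "b \<in> Lminus M"
  shows "Omega a b = 0"
proof -
  let ?N = "cnj_mat M"
  obtain u w where a: "a = (u, ?N *v u)" and b: "b = (w, ?N *v w)" using assms unfolding Lminus_def by blast
  have "(\<Sum>i\<in>UNIV. u $ i * (\<Sum>j\<in>UNIV. ?N $ i $ j * w $ j)) = (\<Sum>i\<in>UNIV. \<Sum>j\<in>UNIV. u $ i * ?N $ i $ j * w $ j)"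
    by (simp add: sum_distrib_left mult.assoc)
  also have "\<dots> = (\<Sum>j\<in>UNIV. \<Sum>i\<in>UNIV. u $ i * ?N $ i $ j * w $ j)" by (rule sum.swap)
  also have "\<dots> = (\<Sum>j\<in>UNIV. (\<Sum>i\<in>UNIV. ?N $ j $ i * u $ i) * w $ j)"
    by (simp add: sum_distrib_right sum_distrib_left cnj_sym[OF assms(1), of _ ] mult_ac)
  finally have "(\<Sum>i\<in>UNIV. u $ i * (\<Sum>j\<in>UNIV. ?N $ i $ j * w $ j)) = (\<Sum>j\<in>UNIV. (\<Sum>i\<in>UNIV. ?N $ j $ i * u $ i) * w $ j)" .
  then show ?thesis
    by (simp add: Omega_def a b matrix_vector_mult_def sum_subtractf)
qed

lemma Lminus_perp:
  assumes "transpose M = M" "\<And>w. w \<in> Lminus M \<Longrightarrow> Omega a w = 0"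
  shows "a \<in> Lminus M"
proof -
  let ?N = "cnj_mat M"
  obtain p q where a: "a = (p, q)" by (cases a)
  have "q $ k = (?N *v p) $ k" for k
  proof -
    have "(axis k 1, ?N *v axis k 1) \<in> Lminus M" unfolding Lminus_def by blast
    then have "Omega a (axis k 1, ?N *v axis k 1) = 0" using assms(2) by blast
    moreover have e1: "(?N *v axis k 1) $ i = ?N $ i $ k" for i
      by (simp add: matrix_vector_mult_def axis_def if_distrib cong: if_cong)
    moreover have e2: "(\<Sum>i\<in>UNIV. q $ i * axis k 1 $ i) = q $ k"
      by (simp add: axis_def if_distrib cong: if_cong)
    ultimately have "(\<Sum>i\<in>UNIV. p $ i * ?N $ i $ k) - q $ k = 0"
      unfolding Omega_def a fst_conv snd_conv e1 sum_subtractf e2 by simp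
    then show ?thesis
      by (simp add: matrix_vector_mult_def cnj_sym[OF assms(1), of k] mult.commute)
  qed
  then have "q = ?N *v p" by (simp add: vec_eq_iff)
  then show ?thesis unfolding Lminus_def a by blast
qed

lemma Lminus_diff: "a \<in> Lminus M \<Longrightarrow> b \<in> Lminus M \<Longrightarrow> a - b \<in> Lminus M"
  unfolding Lminus_def by (auto simp: matrix_vector_mult_diff_distrib)

lemma Lminus_neg: "a \<in> Lminus M \<Longrightarrow> - a \<in> Lminus M"
  unfolding Lminus_def by (auto simp: matrix_vector_mult_diff_distrib[of _ 0, simplified])

lemma Lminus_cmul: "a \<in> Lminus M \<Longrightarrow> cmul c a \<in> Lminus M"
  unfolding Lminus_def cmul_def by (auto simp: vector_scalar_commute)



definition Kr :: "complex^'n::finite^'n \<Rightarrow> complex^'n^'n" where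
  "Kr M = (\<chi> i j. complex_of_real (im_mat M $ i $ j))"

lemma keyeq: "M *v u - cnj_mat M *v u = (2*\<i>) *s (Kr M *v u)"
proof -
  have e: "M $ i $ j - cnj (M $ i $ j) = 2 * \<i> * complex_of_real (Im (M $ i $ j))" for i j
    by (simp add: complex_eq_iff)
  show ?thesis
    by (simp add: vec_eq_iff matrix_vector_mult_def cnj_mat_def Kr_def im_mat_def
        sum_subtractf[symmetric] sum_distrib_left left_diff_distrib[symmetric] e mult.assoc)
qed

lemma Kr_inv:
  assumes "det (im_mat M) \<noteq> 0"
  obtains B where "Kr M ** B = mat 1" "B ** Kr M = mat 1"
proof -
  obtain A where A1: "im_mat M ** A = mat 1" and A2: "A ** im_mat M = mat 1"
    using assms invertible_det_nz invertible_def by blast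
  let ?B = "(\<chi> i j. complex_of_real (A $ i $ j))"
  have "Kr M ** ?B = (\<chi> i j. complex_of_real ((im_mat M ** A) $ i $ j))"
    by (simp add: vec_eq_iff matrix_matrix_mult_def Kr_def)
  also have "\<dots> = mat 1" by (simp add: A1 vec_eq_iff mat_def)
  finally have 1: "Kr M ** ?B = mat 1" .
  have "?B ** Kr M = (\<chi> i j. complex_of_real ((A ** im_mat M) $ i $ j))"
    by (simp add: vec_eq_iff matrix_matrix_mult_def Kr_def)
  also have "\<dots> = mat 1" by (simp add: A2 vec_eq_iff mat_def)
  finally have 2: "?B ** Kr M = mat 1" .
  show ?thesis using that 1 2 by blast
qed

lemma proj_exists:
  assumes "det (im_mat M) \<noteq> 0"
  shows "\<exists>a. a \<in> Lplus M \<and> v - a \<in> Lminus M"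
proof -
  obtain B where B1: "Kr M ** B = mat 1" using Kr_inv[OF assms] by blast
  obtain al be where v: "v = (al, be)" by (cases v)
  let ?N = "cnj_mat M"
  define u where "u = B *v ((1/(2*\<i>)) *s (be - ?N *v al))"
  have "Kr M *v u = (1/(2*\<i>)) *s (be - ?N *v al)"
    by (simp add: u_def matrix_vector_mul_assoc B1)
  then have "M *v u - ?N *v u = be - ?N *v al"
    by (simp add: keyeq vector_smult_assoc)
  then have "be - M *v u = ?N *v (al - u)"
    by (simp add: matrix_vector_mult_diff_distrib algebra_simps)
  then have "v - (u, M *v u) \<in> Lminus M"
    unfolding Lminus_def v by auto
  moreover have "(u, M *v u) \<in> Lplus M" unfolding Lplus_def by blast
  ultimately show ?thesis by blast
qed

lemma proj_unique:
  assumes "det (im_mat M) \<noteq> 0"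
    and "a \<in> Lplus M" "v - a \<in> Lminus M" "a' \<in> Lplus M" "v - a' \<in> Lminus M"
  shows "a = a'"
proof -
  obtain B where B2: "B ** Kr M = mat 1" using Kr_inv[OF assms(1)] by blast
  let ?N = "cnj_mat M"
  obtain u where a: "a = (u, M *v u)" using assms(2) unfolding Lplus_def by blast
  obtain u' where a': "a' = (u', M *v u')" using assms(4) unfolding Lplus_def by blast
  have "a' - a \<in> Lminus M" using Lminus_diff[OF assms(3) assms(5)] by (simp add: algebra_simps)
  then obtain p where h: "u' - u = p" "M *v u' - M *v u = ?N *v p"
    unfolding Lminus_def a a' by auto
  have "M *v (u' - u) - ?N *v (u' - u) = 0"
    using h(2) unfolding h(1)[symmetric] by (simp add: matrix_vector_mult_diff_distrib)
  then have "Kr M *v (u' - u) = 0" by (simp add: keyeq)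
  then have "B *v (Kr M *v (u' - u)) = 0" by simp
  then have "u' - u = 0" by (simp add: matrix_vector_mul_assoc B2)
  then show ?thesis using a a' by simp
qed

lemma proj_char:
  assumes "det (im_mat M) \<noteq> 0" "a \<in> Lplus M"
  shows "a = proj_plus M v \<longleftrightarrow> v - a \<in> Lminus M"
proof -
  have ex1: "\<exists>!a. a \<in> Lplus M \<and> v - a \<in> Lminus M"
    using proj_exists[OF assms(1)] proj_unique[OF assms(1)] by blast
  show ?thesis
  proof
    assume "a = proj_plus M v"
    then show "v - a \<in> Lminus M" unfolding proj_plus_def using theI'[OF ex1] by blast
  next
    assume "v - a \<in> Lminus M"
    then show "a = proj_plus M v" unfolding proj_plus_def using ex1 assms(2)
      by (metis (mono_tags, lifting) the_equality)
  qed
qed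



lemma sum_delta_mult: fixes f :: "'n::finite \<Rightarrow> complex" shows "(\<Sum>i\<in>UNIV. f i * (if j = i then (1::complex) else 0)) = f j"
proof -
  have "(\<Sum>i\<in>UNIV. f i * (if j = i then (1::complex) else 0)) = (\<Sum>i\<in>UNIV. if j = i then f i else 0)"
    by (rule sum.cong) auto
  then show ?thesis by (simp add: sum.delta')
qed

lemma sum_delta_mult2: fixes f :: "'n::finite \<Rightarrow> complex" shows "(\<Sum>i\<in>UNIV. f i * (if i = j then (1::complex) else 0)) = f j"
proof -
  have "(\<Sum>i\<in>UNIV. f i * (if i = j then (1::complex) else 0)) = (\<Sum>i\<in>UNIV. if i = j then f i else 0)"
    by (rule sum.cong) auto
  then show ?thesis by (simp add: sum.delta)
qed

lemma axis_nth: "axis i (1::complex) $ j = (if j = i then 1 else 0)"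
  by (simp add: axis_def)

lemma Omega_e1: "Omega a (axis k 1, 0) = - snd a $ k"
  by (simp add: Omega_def axis_nth sum_delta_mult sum_delta_mult2 sum_negf)

lemma Omega_e2: "Omega a (0, axis k 1) = fst a $ k"
  by (simp add: Omega_def axis_nth sum_delta_mult sum_delta_mult2 sum_negf)

lemma Omega_nondeg: assumes "\<And>v. Omega X v = Omega Y v" shows "X = Y"
proof -
  have "fst X $ k = fst Y $ k" for k using assms[of "(0, axis k 1)"] by (simp add: Omega_e2)
  moreover have "snd X $ k = snd Y $ k" for k using assms[of "(axis k 1, 0)"] by (simp add: Omega_e1)
  ultimately show ?thesis by (simp add: prod_eq_iff vec_eq_iff)
qed

lemma cmul_fst: "fst (cmul c v) = c *s fst v" by (simp add: cmul_def)
lemma cmul_snd: "snd (cmul c v) = c *s snd v" by (simp add: cmul_def)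

lemma pt_decomp:
  "w = (\<Sum>i\<in>UNIV. cmul (fst w $ i) (axis i 1, 0) + cmul (snd w $ i) (0, axis i 1))"
proof -
  have 1: "fst w $ j = fst (\<Sum>i\<in>UNIV. cmul (fst w $ i) (axis i 1, 0) + cmul (snd w $ i) (0, axis i 1)) $ j" for j
    by (simp add: fst_sum sum_component cmul_fst axis_nth sum_delta_mult)
  have 2: "snd w $ j = snd (\<Sum>i\<in>UNIV. cmul (fst w $ i) (axis i 1, 0) + cmul (snd w $ i) (0, axis i 1)) $ j" for j
    by (simp add: snd_sum sum_component cmul_snd axis_nth sum_delta_mult)
  show ?thesis by (rule prod_eqI; rule vec_eq_iff[THEN iffD2]; rule allI; rule 1 2)
qed

lemma ham_vf_prop:
  assumes hol: "holo H"
  shows "Omega (ham_vf H x) w = frechet_derivative H (at x) w"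
proof -
  let ?D = "frechet_derivative H (at x)"
  have l: "linear ?D" using holo_lin hol by blast
  let ?X = "((\<chi> i. ?D (0, axis i 1)), (\<chi> i. - ?D (axis i 1, 0)))"
  have Dw: "?D w = (\<Sum>i\<in>UNIV. fst w $ i * ?D (axis i 1, 0) + snd w $ i * ?D (0, axis i 1))" for w
  proof -
    have "?D w = ?D (\<Sum>i\<in>UNIV. cmul (fst w $ i) (axis i 1, 0) + cmul (snd w $ i) (0, axis i 1))"
      using pt_decomp[of w] by (rule arg_cong)
    also have "\<dots> = (\<Sum>i\<in>UNIV. fst w $ i * ?D (axis i 1, 0) + snd w $ i * ?D (0, axis i 1))"
      by (simp add: linear_sum[OF l] linear_add[OF l] holo_cmul[OF hol])
    finally show ?thesis .
  qed
  have X: "Omega ?X w = ?D w" for w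
  proof -
    have "Omega ?X w = (\<Sum>i\<in>UNIV. fst w $ i * ?D (axis i 1, 0) + snd w $ i * ?D (0, axis i 1))"
      unfolding Omega_def by (rule sum.cong) (auto simp: algebra_simps)
    also note Dw[of w, symmetric]
    finally show ?thesis .
  qed
  have ex1: "\<exists>!X. \<forall>v. Omega X v = ?D v"
    apply (rule ex1I[of _ ?X])
     apply (simp add: X)
    apply (rule Omega_nondeg)
    subgoal premises p for Y v using p[rule_format, of v] X[of v] by simp
    done
  show ?thesis unfolding ham_vf_def using theI'[OF ex1] by blast
qed



lemma bl_snd_nth: "bounded_linear (\<lambda>z::'n::finite pt. snd z $ i)"
  by (rule bounded_linear_compose[OF bounded_linear_vec_nth bounded_linear_snd])
lemma bl_fst_nth: "bounded_linear (\<lambda>z::'n::finite pt. fst z $ i)"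
  by (rule bounded_linear_compose[OF bounded_linear_vec_nth bounded_linear_fst])

lemma theta_deriv:
  assumes p: "(p has_vector_derivative p') (at x within s)"
    and q: "(q has_vector_derivative q') (at x within s)"
  shows "((\<lambda>t. theta (p t) (q t)) has_vector_derivative (theta p' (q x) + theta (p x) q')) (at x within s)"
proof -
  have ps: "((\<lambda>t. snd (p t) $ i) has_vector_derivative snd p' $ i) (at x within s)" for i
    using bounded_linear.has_vector_derivative[OF bl_snd_nth p] .
  have qf: "((\<lambda>t. fst (q t) $ i) has_vector_derivative fst q' $ i) (at x within s)" for i
    using bounded_linear.has_vector_derivative[OF bl_fst_nth q] .
  have "((\<lambda>t. \<Sum>i\<in>UNIV. snd (p t) $ i * fst (q t) $ i) has_vector_derivative
      (\<Sum>i\<in>UNIV. snd (p x) $ i * fst q' $ i + snd p' $ i * fst (q x) $ i)) (at x within s)"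
    by (intro has_vector_derivative_sum has_vector_derivative_mult ps qf)
  then show ?thesis by (simp add: theta_def sum.distrib add.commute)
qed

lemma theta_cont:
  assumes "continuous_on S p" "continuous_on S q"
  shows "continuous_on S (\<lambda>s. theta (p s) (q s))"
  unfolding theta_def using assms by (intro continuous_intros)

lemma lin_path: "((\<lambda>e::real. a + e *\<^sub>R b) has_vector_derivative b) F"
proof -
  have "((\<lambda>e::real. a + e *\<^sub>R b) has_derivative (\<lambda>h. 0 + h *\<^sub>R b)) F"
    by (intro has_derivative_add has_derivative_const bounded_linear_imp_has_derivative bounded_linear_scaleR_left)
  then show ?thesis by (simp add: has_vector_derivative_def)
qed

lemma H_path_deriv:
  assumes hol: "holo H"
  shows "((\<lambda>e::real. H (a + e *\<^sub>R b)) has_vector_derivative frechet_derivative H (at (a + e *\<^sub>R b)) b) (at e)"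
proof -
  have g: "((\<lambda>e::real. a + e *\<^sub>R b) has_derivative (\<lambda>h. h *\<^sub>R b)) (at e)"
    using lin_path unfolding has_vector_derivative_def .
  have "((H \<circ> (\<lambda>e. a + e *\<^sub>R b)) has_derivative (frechet_derivative H (at (a + e *\<^sub>R b)) \<circ> (\<lambda>h. h *\<^sub>R b))) (at e)"
    by (rule diff_chain_at[OF g holo_deriv[OF hol]])
  moreover have "frechet_derivative H (at (a + e *\<^sub>R b)) \<circ> (\<lambda>h. h *\<^sub>R b) = (\<lambda>h. h *\<^sub>R frechet_derivative H (at (a + e *\<^sub>R b)) b)"
    using linear_scale[OF holo_lin[OF hol]] by (auto simp: o_def)
  ultimately show ?thesis by (simp add: has_vector_derivative_def o_def)
qed



lemma first_var:
  fixes z dz z' g' :: "real \<Rightarrow> 'n::finite pt"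
  assumes hol: "holo H" and t01: "t0 < t1"
    and zd: "\<And>t. t \<in> {t0..t1} \<Longrightarrow> (z has_vector_derivative z' t) (at t within {t0..t1})"
    and cz': "continuous_on {t0..t1} z'"
    and dd: "\<And>t. t \<in> {t0..t1} \<Longrightarrow> (dz has_vector_derivative g' t) (at t within {t0..t1})"
    and cg': "continuous_on {t0..t1} g'"
    and e0: "dz t0 = 0" and e1: "dz t1 = 0"
  shows "((\<lambda>e::real. action H (\<lambda>t. z t + e *\<^sub>R dz t) t0 t1) has_vector_derivative
           integral {t0..t1} (\<lambda>t. Omega (z' t) (dz t) - frechet_derivative H (at (z t)) (dz t))) (at 0)"
proof -
  let ?I = "{t0..t1}"
  let ?D = "\<lambda>x. frechet_derivative H (at x)"
  have cz: "continuous_on ?I z" using zd continuous_on_vector_derivative by blast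
  have cdz: "continuous_on ?I dz" using dd continuous_on_vector_derivative by blast
  have cH: "continuous_on UNIV H" using holo_cont[OF hol] .
  define f where "f e t = theta (z t + e *\<^sub>R dz t) (z' t + e *\<^sub>R g' t) - H (z t + e *\<^sub>R dz t)" for e t
  define fx where "fx e t = theta (dz t) (z' t + e *\<^sub>R g' t) + theta (z t + e *\<^sub>R dz t) (g' t)
      - ?D (z t + e *\<^sub>R dz t) (dz t)" for e t
  have vd: "vector_derivative (\<lambda>t. z t + e *\<^sub>R dz t) (at t within ?I) = z' t + e *\<^sub>R g' t"
    if t: "t \<in> ?I" for e t
  proof -
    have "((\<lambda>t. z t + e *\<^sub>R dz t) has_vector_derivative z' t + e *\<^sub>R g' t) (at t within ?I)"
      by (intro has_vector_derivative_add zd t bounded_linear.has_vector_derivative[OF bounded_linear_scaleR_right] dd)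
    then show ?thesis using vector_derivative_within_cbox[of t0 t1 t] t01 t by (simp add: cbox_interval)
  qed
  have act: "action H (\<lambda>t. z t + e *\<^sub>R dz t) t0 t1 = integral (cbox t0 t1) (f e)" for e
    unfolding action_def cbox_interval f_def
    by (rule integral_cong) (simp add: vd)
  have cf: "continuous_on ?I (f e)" for e
    unfolding f_def
    by (intro continuous_intros theta_cont continuous_on_compose2[OF cH] cz cdz cz' cg') auto
  have D1: "((\<lambda>e. f e t) has_vector_derivative fx e t) (at e within UNIV)" for e t
    unfolding f_def fx_def
    by (intro has_vector_derivative_diff theta_deriv lin_path H_path_deriv[OF hol])
  have cfx: "continuous_on (UNIV \<times> cbox t0 t1) (\<lambda>(e, t). fx e t)"
  proof -
    have s: "snd ` (UNIV \<times> ?I) \<subseteq> ?I" by auto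
    have c1: "continuous_on (UNIV \<times> ?I) (\<lambda>x. z (snd x))"
      by (rule continuous_on_compose2[OF cz continuous_on_snd[OF continuous_on_id] s])
    have c2: "continuous_on (UNIV \<times> ?I) (\<lambda>x. dz (snd x))"
      by (rule continuous_on_compose2[OF cdz continuous_on_snd[OF continuous_on_id] s])
    have c3: "continuous_on (UNIV \<times> ?I) (\<lambda>x. z' (snd x))"
      by (rule continuous_on_compose2[OF cz' continuous_on_snd[OF continuous_on_id] s])
    have c4: "continuous_on (UNIV \<times> ?I) (\<lambda>x. g' (snd x))"
      by (rule continuous_on_compose2[OF cg' continuous_on_snd[OF continuous_on_id] s])
    have "continuous_on (UNIV \<times> ?I) (\<lambda>x. fx (fst x) (snd x))"
      unfolding fx_def
      by (intro continuous_intros theta_cont holo_cont_D2[OF hol] c1 c2 c3 c4)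
    then show ?thesis by (simp add: cbox_interval case_prod_beta')
  qed
  have L: "((\<lambda>e. integral (cbox t0 t1) (f e)) has_vector_derivative integral (cbox t0 t1) (fx 0)) (at 0 within UNIV)"
    by (rule leibniz_rule_vector_derivative[OF D1 _ cfx])
       (auto simp: cbox_interval intro!: integrable_continuous_interval cf)
  have L2: "((\<lambda>e::real. action H (\<lambda>t. z t + e *\<^sub>R dz t) t0 t1) has_vector_derivative integral ?I (fx 0)) (at 0)"
    using L by (simp add: act cbox_interval)
  \<comment> \<open>integration by parts\<close>
  have bp: "((\<lambda>t. theta (z' t) (dz t) + theta (z t) (g' t)) has_integral (theta (z t1) (dz t1) - theta (z t0) (dz t0))) ?I"
    by (rule fundamental_theorem_of_calculus) (use t01 in \<open>auto intro!: theta_deriv zd dd\<close>)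
  then have bp0: "((\<lambda>t. theta (z' t) (dz t) + theta (z t) (g' t)) has_integral 0) ?I"
    by (simp add: e0 e1)
  have cO: "continuous_on ?I (\<lambda>t. Omega (z' t) (dz t) - ?D (z t) (dz t))"
    unfolding Omega_theta
    by (intro continuous_intros theta_cont holo_cont_D2[OF hol] cz cdz cz')
  have "(fx 0 has_integral (integral ?I (\<lambda>t. Omega (z' t) (dz t) - ?D (z t) (dz t)) + 0)) ?I"
  proof -
    have "((\<lambda>t. (Omega (z' t) (dz t) - ?D (z t) (dz t)) + (theta (z' t) (dz t) + theta (z t) (g' t)))
        has_integral (integral ?I (\<lambda>t. Omega (z' t) (dz t) - ?D (z t) (dz t)) + 0)) ?I"
      by (intro has_integral_add bp0 integrable_integral integrable_continuous_interval cO)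
    moreover have "(\<lambda>t. (Omega (z' t) (dz t) - ?D (z t) (dz t)) + (theta (z' t) (dz t) + theta (z t) (g' t))) = fx 0"
      by (rule ext) (simp add: fx_def Omega_theta)
    ultimately show ?thesis by simp
  qed
  then have "integral ?I (fx 0) = integral ?I (\<lambda>t. Omega (z' t) (dz t) - ?D (z t) (dz t))"
    by (simp add: integral_unique)
  then show ?thesis using L2 by simp
qed



lemma dubois:
  fixes g :: "real \<Rightarrow> complex"
  assumes t01: "t0 < t1" and cg: "continuous_on {t0..t1} g"
    and hyp: "\<And>c c'. (\<And>t. t \<in> {t0..t1} \<Longrightarrow> (c has_vector_derivative c' t) (at t within {t0..t1}))
        \<Longrightarrow> continuous_on {t0..t1} c' \<Longrightarrow> c t0 = 0 \<Longrightarrow> c t1 = 0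
        \<Longrightarrow> integral {t0..t1} (\<lambda>t. c t * g t) = 0"
    and t: "t \<in> {t0..t1}"
  shows "g t = 0"
proof -
  let ?I = "{t0..t1}"
  define G where "G s = integral {t0..s} g" for s
  have Gd: "(G has_vector_derivative g s) (at s within ?I)" if "s \<in> ?I" for s
    unfolding G_def using integral_has_vector_derivative[OF cg that] .
  have cG: "continuous_on ?I G" using Gd continuous_on_vector_derivative by blast
  define mu where "mu = integral ?I G / of_real (t1 - t0)"
  define h where "h s = cnj (G s - mu)" for s
  have ch: "continuous_on ?I h" unfolding h_def by (intro continuous_intros cG)
  define c where "c s = integral {t0..s} h" for s
  have cd: "(c has_vector_derivative h s) (at s within ?I)" if "s \<in> ?I" for s
    unfolding c_def using integral_has_vector_derivative[OF ch that] .
  have cc: "continuous_on ?I c" using cd continuous_on_vector_derivative by blast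
  have c0: "c t0 = 0" by (simp add: c_def)
  have intG: "G integrable_on ?I" using cG integrable_continuous_interval by blast
  have "c t1 = cnj (integral ?I (\<lambda>s. G s - mu))"
    by (simp add: c_def h_def[abs_def] integral_cnj)
  also have "integral ?I (\<lambda>s. G s - mu) = integral ?I G - (t1 - t0) *\<^sub>R mu"
    using t01 integral_diff[OF intG integrable_continuous_interval[OF continuous_on_const[of _ mu]]] by simp
  also have "\<dots> = 0"
    using t01 by (simp add: mu_def scaleR_conv_of_real)
  finally have c1: "c t1 = 0" by simp
  have I1: "integral ?I (\<lambda>s. c s * g s) = 0" by (rule hyp[OF cd ch c0 c1])
  have "((\<lambda>s. c s * g s + h s * G s) has_integral (c t1 * G t1 - c t0 * G t0)) ?I"
    by (rule fundamental_theorem_of_calculus) (use t01 in \<open>auto intro!: has_vector_derivative_mult cd Gd\<close>)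
  then have I2: "((\<lambda>s. c s * g s + h s * G s) has_integral 0) ?I" by (simp add: c0 c1)
  have icg: "(\<lambda>s. c s * g s) integrable_on ?I"
    by (intro integrable_continuous_interval continuous_intros cc cg)
  have ihG: "(\<lambda>s. h s * G s) integrable_on ?I"
    by (intro integrable_continuous_interval continuous_intros ch cG)
  have "integral ?I (\<lambda>s. c s * g s + h s * G s) = 0" using I2 by (simp add: integral_unique)
  then have I3: "integral ?I (\<lambda>s. h s * G s) = 0"
    using I1 by (simp add: integral_add[OF icg ihG])
  have ih: "h integrable_on ?I" using ch integrable_continuous_interval by blast
  have "integral ?I (\<lambda>s. h s * (G s - mu)) = integral ?I (\<lambda>s. h s * G s - h s * mu)"
    by (simp add: algebra_simps)
  also have "\<dots> = integral ?I (\<lambda>s. h s * G s) - integral ?I (\<lambda>s. h s * mu)"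
    by (rule integral_diff[OF ihG]) (intro integrable_continuous_interval continuous_intros ch)
  also have "integral ?I (\<lambda>s. h s * mu) = c t1 * mu"
    by (simp add: c_def)
  finally have I4: "integral ?I (\<lambda>s. h s * (G s - mu)) = 0" using I3 c1 by simp
  define r where "r s = (norm (G s - mu))\<^sup>2" for s
  have cr: "continuous_on ?I r" unfolding r_def by (intro continuous_intros cG)
  have "(r has_integral integral ?I r) ?I" using cr integrable_continuous_interval by blast
  then have "((\<lambda>s. complex_of_real (r s)) has_integral of_real (integral ?I r)) ?I"
    by (rule has_integral_of_real)
  moreover have "(\<lambda>s. complex_of_real (r s)) = (\<lambda>s. h s * (G s - mu))"
    by (rule ext, simp only: r_def h_def complex_norm_square, rule mult.commute)
  ultimately have "complex_of_real (integral ?I r) = 0" using I4 by (simp add: integral_unique)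
  then have ir: "integral (cbox t0 t1) r = 0" by (simp add: cbox_interval)
  have cr': "continuous_on (cbox t0 t1) r" using cr by (simp add: cbox_interval)
  have bx: "box t0 t1 \<noteq> {}" using t01 by (simp add: box_real)
  have rnn: "\<And>x. x \<in> cbox t0 t1 \<Longrightarrow> r x \<ge> 0" by (simp add: r_def)
  have r0: "\<forall>s\<in>cbox t0 t1. r s = 0"
    using integral_cbox_eq_0_iff[OF cr' bx rnn] ir by blast
  have Gmu: "G s = mu" if "s \<in> ?I" for s
  proof -
    have "r s = 0" using r0 that by (simp add: cbox_interval)
    then show ?thesis by (simp add: r_def)
  qed
  have d1: "((\<lambda>s. mu) has_vector_derivative g t) (at t within ?I)"
    by (rule has_vector_derivative_transform[OF t _ Gd[OF t]]) (rule Gmu[symmetric])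
  have d2: "((\<lambda>s. mu) has_vector_derivative 0) (at t within ?I)" by (rule has_vector_derivative_const)
  show ?thesis
    using vector_derivative_unique_within_closed_interval[of t0 t1 t "\<lambda>s. mu" "g t" 0, unfolded cbox_interval] t01 t d1 d2
    by blast
qed



theorem mainTheorem8:
  fixes M :: "complex^'n::finite^'n" and H :: "'n pt \<Rightarrow> complex"
    and z :: "real \<Rightarrow> 'n pt" and t0 t1 :: real
  assumes "transpose M = M"
    and "det (im_mat M) \<noteq> 0"
    and "holo H"
    and "real_on_reals H"
    and "t0 < t1"
    and "admissible M z t0 t1"
  shows "(\<forall>dz. adm_var M dz t0 t1 \<longrightarrow>
            ((\<lambda>\<epsilon>::real. action H (\<lambda>t. z t + \<epsilon> *\<^sub>R dz t) t0 t1) has_vector_derivative 0) (at 0))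
         \<longleftrightarrow> (\<forall>t\<in>{t0..t1}. vector_derivative z (at t within {t0..t1}) = proj_plus M (ham_vf H (z t)))"
proof -
  let ?I = "{t0..t1}"
  let ?D = "\<lambda>x. frechet_derivative H (at x)"
  let ?X = "\<lambda>x. ham_vf H x"
  have hol: "holo H" using assms(3) .
  from assms(6) obtain z' where zd: "\<forall>t\<in>?I. (z has_vector_derivative z' t) (at t within ?I)"
      and cz': "continuous_on ?I z'"
      and zL: "\<forall>t\<in>?I. vector_derivative z (at t within ?I) \<in> Lplus M"
    unfolding admissible_def C1_on_def by blast
  have vz: "vector_derivative z (at t within ?I) = z' t" if "t \<in> ?I" for t
    using vector_derivative_within_cbox[of t0 t1 t z "z' t"] assms(5) that zd by (simp add: cbox_interval)
  have z'L: "z' t \<in> Lplus M" if "t \<in> ?I" for t using zL vz that by auto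
  have cz: "continuous_on ?I z" using zd continuous_on_vector_derivative by blast
  have OX: "Omega (?X x) w = ?D x w" for x w using ham_vf_prop[OF hol] .
  have key: "Omega (z' t) w - ?D (z t) w = Omega (z' t - ?X (z t)) w" for t w
    by (simp add: Omega_diff_left OX)
  have FV: "((\<lambda>\<epsilon>::real. action H (\<lambda>t. z t + \<epsilon> *\<^sub>R dz t) t0 t1) has_vector_derivative
      integral ?I (\<lambda>t. Omega (z' t) (dz t) - ?D (z t) (dz t))) (at 0)"
    if "adm_var M dz t0 t1" for dz
  proof -
    from that obtain g' where dd: "\<forall>t\<in>?I. (dz has_vector_derivative g' t) (at t within ?I)"
        and cg': "continuous_on ?I g'" and e0: "dz t0 = 0" and e1: "dz t1 = 0"
      unfolding adm_var_def C1_on_def by blast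
    show ?thesis by (rule first_var[OF hol assms(5), where z=z and z'=z' and dz=dz and g'=g']) (use zd cz' dd cg' e0 e1 in auto)
  qed
  have stat_iff: "((\<lambda>\<epsilon>::real. action H (\<lambda>t. z t + \<epsilon> *\<^sub>R dz t) t0 t1) has_vector_derivative 0) (at 0)
      \<longleftrightarrow> integral ?I (\<lambda>t. Omega (z' t) (dz t) - ?D (z t) (dz t)) = 0"
    if "adm_var M dz t0 t1" for dz
  proof
    assume "((\<lambda>\<epsilon>::real. action H (\<lambda>t. z t + \<epsilon> *\<^sub>R dz t) t0 t1) has_vector_derivative 0) (at 0)"
    from vector_derivative_unique_at[OF FV[OF that] this]
    show "integral ?I (\<lambda>t. Omega (z' t) (dz t) - ?D (z t) (dz t)) = 0" .
  next
    assume "integral ?I (\<lambda>t. Omega (z' t) (dz t) - ?D (z t) (dz t)) = 0"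
    with FV[OF that] show "((\<lambda>\<epsilon>::real. action H (\<lambda>t. z t + \<epsilon> *\<^sub>R dz t) t0 t1) has_vector_derivative 0) (at 0)"
      by simp
  qed
  show ?thesis
  proof
    assume L: "\<forall>dz. adm_var M dz t0 t1 \<longrightarrow>
            ((\<lambda>\<epsilon>::real. action H (\<lambda>t. z t + \<epsilon> *\<^sub>R dz t) t0 t1) has_vector_derivative 0) (at 0)"
    have Z: "integral ?I (\<lambda>t. Omega (z' t) (dz t) - ?D (z t) (dz t)) = 0" if "adm_var M dz t0 t1" for dz
      using L that stat_iff by blast
    have Fp: "z' t - ?X (z t) \<in> Lminus M" if t: "t \<in> ?I" for t
    proof (rule Lminus_perp[OF assms(1)])
      fix w assume w: "w \<in> Lminus M"
      let ?g = "\<lambda>t. Omega (z' t) w - ?D (z t) w"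
      have cg: "continuous_on ?I ?g"
        unfolding Omega_theta
        by (intro continuous_intros theta_cont holo_cont_D2[OF hol] cz cz')
      have "?g t = 0"
      proof (rule dubois[OF assms(5) cg _ t])
        fix c c' :: "real \<Rightarrow> complex" assume cd: "\<And>t. t \<in> ?I \<Longrightarrow> (c has_vector_derivative c' t) (at t within ?I)"
          and cc': "continuous_on ?I c'" and c0: "c t0 = 0" and c1: "c t1 = 0"
        define dz where "dz t = cmul (c t) w" for t
        have "adm_var M dz t0 t1"
          unfolding adm_var_def C1_on_def
        proof (intro conjI exI[of _ "\<lambda>t. cmul (c' t) w"] ballI)
          show "(dz has_vector_derivative cmul (c' t) w) (at t within ?I)" if "t \<in> ?I" for t
            unfolding dz_def using bounded_linear.has_vector_derivative[OF bounded_linear_cmul cd[OF that]] .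
          show "continuous_on ?I (\<lambda>t. cmul (c' t) w)"
            by (rule continuous_on_compose2[OF linear_continuous_on[OF bounded_linear_cmul] cc']) auto
          show "dz t \<in> Lminus M" for t unfolding dz_def by (rule Lminus_cmul[OF w])
          show "dz t0 = 0" "dz t1 = 0" by (simp_all add: dz_def c0 c1)
        qed
        then have "integral ?I (\<lambda>t. Omega (z' t) (dz t) - ?D (z t) (dz t)) = 0" by (rule Z)
        moreover have "(\<lambda>t. Omega (z' t) (dz t) - ?D (z t) (dz t)) = (\<lambda>t. c t * ?g t)"
          by (rule ext) (simp add: dz_def Omega_cmul_right holo_cmul[OF hol] right_diff_distrib)
        ultimately show "integral ?I (\<lambda>t. c t * ?g t) = 0" by simp
      qed
      then show "Omega (z' t - ?X (z t)) w = 0" using key by simp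
    qed
    show "\<forall>t\<in>?I. vector_derivative z (at t within ?I) = proj_plus M (?X (z t))"
    proof
      fix t assume t: "t \<in> ?I"
      have "- (z' t - ?X (z t)) \<in> Lminus M" using Lminus_neg[OF Fp[OF t]] .
      then have "?X (z t) - z' t \<in> Lminus M" by simp
      then have "z' t = proj_plus M (?X (z t))" using proj_char[OF assms(2) z'L[OF t]] by blast
      then show "vector_derivative z (at t within ?I) = proj_plus M (?X (z t))" using vz t by simp
    qed
  next
    assume R: "\<forall>t\<in>?I. vector_derivative z (at t within ?I) = proj_plus M (?X (z t))"
    show "\<forall>dz. adm_var M dz t0 t1 \<longrightarrow>
            ((\<lambda>\<epsilon>::real. action H (\<lambda>t. z t + \<epsilon> *\<^sub>R dz t) t0 t1) has_vector_derivative 0) (at 0)"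
    proof (intro allI impI)
      fix dz assume dz: "adm_var M dz t0 t1"
      have pw: "Omega (z' t) (dz t) - ?D (z t) (dz t) = 0" if t: "t \<in> ?I" for t
      proof -
        have "z' t = proj_plus M (?X (z t))" using R vz t by auto
        then have "?X (z t) - z' t \<in> Lminus M" using proj_char[OF assms(2) z'L[OF t]] by blast
        then have "- (?X (z t) - z' t) \<in> Lminus M" by (rule Lminus_neg)
        then have "z' t - ?X (z t) \<in> Lminus M" by simp
        moreover have "dz t \<in> Lminus M" using dz t unfolding adm_var_def by blast
        ultimately have "Omega (z' t - ?X (z t)) (dz t) = 0" by (rule Lminus_lagr[OF assms(1)])
        then show ?thesis using key by simp
      qed
      have "integral ?I (\<lambda>t. Omega (z' t) (dz t) - ?D (z t) (dz t)) = integral ?I (\<lambda>t. 0)"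
        by (rule integral_cong) (rule pw)
      then have "integral ?I (\<lambda>t. Omega (z' t) (dz t) - ?D (z t) (dz t)) = 0" by simp
      then show "((\<lambda>\<epsilon>::real. action H (\<lambda>t. z t + \<epsilon> *\<^sub>R dz t) t0 t1) has_vector_derivative 0) (at 0)"
        using stat_iff[OF dz] by simp
    qed
  qed
qed


end
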